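(* Let $G$ and $H$ be finite simple graphs, where $G$ has no isolated vertices and $\gamma_t(G)=2\gamma(G)$. Let $S$ be a dominating set of $G$ of minimum cardinality $\gamma(G)$ and let $S'$ be a dominating set of $H$ of minimum cardinality with $|S'|=2$. Then $S\times S'$ is a dominating set of minimum cardinality of the lexicographic product $G\circ H$.
   Context: A set $D\subseteq V(G)$ is a dominating set if every vertex outside $D$ has a neighbor in $D$; $\gamma(\cdot)$ denotes the minimum cardinality of a dominating set. A set $D_t$ is a total dominating set if every vertex of the graph is adjacent to a vertex of $D_t$; $\gamma_t(G)$ is the minimum cardinality of a total dominating set (defined for graphs without isolated vertices). The lexicographic product $G\circ H$ has vertex set $V(G)\times V(H)$, with $(a,x)$ adjacent to $(b,y)$ iff either $\{a,b\}\in E(G)$, or $a=b$ and $\{x,y\}\in E(H)$. *)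

theory Defs
  imports Main
begin

definition simple_graph :: "'a set \<Rightarrow> ('a \<Rightarrow> 'a \<Rightarrow> bool) \<Rightarrow> bool" where
  "simple_graph V E \<longleftrightarrow> finite V \<and> (\<forall>x y. E x y \<longrightarrow> x \<in> V \<and> y \<in> V)
     \<and> (\<forall>x y. E x y \<longrightarrow> E y x) \<and> (\<forall>x. \<not> E x x)"

definition no_isolated :: "'a set \<Rightarrow> ('a \<Rightarrow> 'a \<Rightarrow> bool) \<Rightarrow> bool" where
  "no_isolated V E \<longleftrightarrow> (\<forall>v\<in>V. \<exists>u\<in>V. E v u)"

definition dominating :: "'a set \<Rightarrow> ('a \<Rightarrow> 'a \<Rightarrow> bool) \<Rightarrow> 'a set \<Rightarrow> bool" where
  "dominating V E D \<longleftrightarrow> D \<subseteq> V \<and> (\<forall>v\<in>V - D. \<exists>u\<in>D. E v u)"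

definition total_dominating :: "'a set \<Rightarrow> ('a \<Rightarrow> 'a \<Rightarrow> bool) \<Rightarrow> 'a set \<Rightarrow> bool" where
  "total_dominating V E D \<longleftrightarrow> D \<subseteq> V \<and> (\<forall>v\<in>V. \<exists>u\<in>D. E v u)"

definition domination_number :: "'a set \<Rightarrow> ('a \<Rightarrow> 'a \<Rightarrow> bool) \<Rightarrow> nat" where
  "domination_number V E = Min {card D | D. dominating V E D}"

definition total_domination_number :: "'a set \<Rightarrow> ('a \<Rightarrow> 'a \<Rightarrow> bool) \<Rightarrow> nat" where
  "total_domination_number V E = Min {card D | D. total_dominating V E D}"

definition min_dominating :: "'a set \<Rightarrow> ('a \<Rightarrow> 'a \<Rightarrow> bool) \<Rightarrow> 'a set \<Rightarrow> bool" where
  "min_dominating V E D \<longleftrightarrow> dominating V E D \<and> card D = domination_number V E"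

definition lex_edges :: "'a set \<Rightarrow> ('a \<Rightarrow> 'a \<Rightarrow> bool) \<Rightarrow> 'b set \<Rightarrow> ('b \<Rightarrow> 'b \<Rightarrow> bool)
    \<Rightarrow> ('a \<times> 'b) \<Rightarrow> ('a \<times> 'b) \<Rightarrow> bool" where
  "lex_edges VG EG VH EH p q \<longleftrightarrow> p \<in> VG \<times> VH \<and> q \<in> VG \<times> VH \<and>
     (EG (fst p) (fst q) \<or> (fst p = fst q \<and> EH (snd p) (snd q)))"

end

theory Submission
  imports Defs
begin

lemma Min_le_cardI:
  assumes "finite V" "P D" "\<And>D. P D \<Longrightarrow> D \<subseteq> V"
  shows "Min {card D | D. P D} \<le> card D"
proof -
  have "{card D | D. P D} \<subseteq> {..card V}"
    using assms by (auto intro: card_mono)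
  hence "finite {card D | D. P D}" using finite_subset by blast
  thus ?thesis using assms(2) by (auto intro: Min_le)
qed

lemma Min_in_cardI:
  assumes "finite V" "P D0" "\<And>D. P D \<Longrightarrow> D \<subseteq> V"
  shows "\<exists>D. P D \<and> Min {card D | D. P D} = card D"
proof -
  have "{card D | D. P D} \<subseteq> {..card V}"
    using assms by (auto intro: card_mono)
  hence "finite {card D | D. P D}" using finite_subset by blast
  moreover have "{card D | D. P D} \<noteq> {}" using assms(2) by auto
  ultimately have "Min {card D | D. P D} \<in> {card D | D. P D}" by (rule Min_in)
  thus ?thesis by auto
qed

lemma lower_bound:
  fixes VG :: "'a set" and EG :: "'a \<Rightarrow> 'a \<Rightarrow> bool"
    and VH :: "'b set" and EH :: "'b \<Rightarrow> 'b \<Rightarrow> bool"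
  assumes sg: "simple_graph VG EG" and sh: "simple_graph VH EH"
    and ni: "no_isolated VG EG"
    and dH: "domination_number VH EH = 2" and neH: "VH \<noteq> {}"
    and D: "dominating (VG \<times> VH) (lex_edges VG EG VH EH) D"
  shows "total_domination_number VG EG \<le> card D"
proof -
  have fG: "finite VG" and fH: "finite VH" using sg sh by (auto simp: simple_graph_def)
  have DV: "D \<subseteq> VG \<times> VH" using D by (simp add: dominating_def)
  have fD: "finite D" using DV fG fH finite_subset by blast
  define P where "P = fst ` D"
  have PV: "P \<subseteq> VG" using DV P_def by auto
  have fP: "finite P" using fD P_def by simp
  define A where "A = {a\<in>P. \<not>(\<exists>b\<in>P. EG a b)}"
  have fA: "finite A" using fP A_def by simp
  define n where "n = (\<lambda>a. SOME b. b \<in> VG \<and> EG a b)"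
  have nprop: "n a \<in> VG \<and> EG a (n a)" if "a \<in> VG" for a
  proof -
    have "\<exists>b. b \<in> VG \<and> EG a b" using ni that unfolding no_isolated_def by blast
    thus ?thesis unfolding n_def by (rule someI_ex)
  qed
  define T where "T = P \<union> n ` A"
  have TV: "T \<subseteq> VG" using PV nprop A_def T_def by auto
  have Ttot: "total_dominating VG EG T"
    unfolding total_dominating_def
  proof (intro conjI ballI TV)
    fix v assume v: "v \<in> VG"
    show "\<exists>u\<in>T. EG v u"
    proof (cases "v \<in> P")
      case True
      show ?thesis
      proof (cases "v \<in> A")
        case True thus ?thesis using nprop v T_def by auto
      next
        case False thus ?thesis using \<open>v \<in> P\<close> A_def T_def by auto
      qed
    next
      case False
      obtain x where x: "x \<in> VH" using neH by auto
      have "(v,x) \<notin> D" using False unfolding P_def by (metis fst_conv image_eqI)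
      then obtain q where q: "q \<in> D" "lex_edges VG EG VH EH (v,x) q"
        using D v x unfolding dominating_def by blast
      have "fst q \<noteq> v" using q(1) False P_def by auto
      hence "EG v (fst q)" using q(2) by (auto simp: lex_edges_def)
      moreover have "fst q \<in> T" using q(1) P_def T_def by auto
      ultimately show ?thesis by blast
    qed
  qed
  have "total_domination_number VG EG \<le> card T"
    unfolding total_domination_number_def
    by (rule Min_le_cardI[where P="total_dominating VG EG", OF fG Ttot]) (simp add: total_dominating_def)
  also have "card T \<le> card P + card A"
    unfolding T_def using card_Un_le[of P "n ` A"] card_image_le[OF fA, of n] by linarith
  also have "card P + card A \<le> card D"
  proof -
    define DA where "DA = {p\<in>D. fst p \<in> A}"
    define DB where "DB = {p\<in>D. fst p \<notin> A}"
    have disj: "DA \<inter> DB = {}" and un: "DA \<union> DB = D" using DA_def DB_def by auto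
    have cD: "card D = card DA + card DB"
      proof -
        have "finite DA" "finite DB" using fD DA_def DB_def by auto
        thus ?thesis using card_Un_disjoint[of DA DB] disj un by simp
      qed
    have "fst ` DB = P - A" using DB_def P_def A_def by auto
    hence c1: "card (P - A) \<le> card DB"
      proof -
        have "finite DB" using fD DB_def by auto
        thus ?thesis using card_image_le[of DB fst] \<open>fst ` DB = P - A\<close> by simp
      qed
    have fib: "2 \<le> card {p\<in>D. fst p = a}" if a: "a \<in> A" for a
    proof (rule ccontr)
      assume "\<not> 2 \<le> card {p\<in>D. fst p = a}"
      hence le1: "card {p\<in>D. fst p = a} \<le> 1" by simp
      have "a \<in> P" using a A_def by simp
      then obtain p where "p \<in> D" "a = fst p" unfolding P_def by blast
      then obtain y where y: "(a,y) \<in> D" by (metis prod.collapse)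
      have fF: "finite {p\<in>D. fst p = a}" using fD by simp
      have onlyy: "z = y" if "(a,z) \<in> D" for z
      proof -
        have "(a,z) \<in> {p\<in>D. fst p = a}" "(a,y) \<in> {p\<in>D. fst p = a}" using that y by auto
        moreover have "\<forall>a1 \<in> {p\<in>D. fst p = a}. \<forall>a2 \<in> {p\<in>D. fst p = a}. a1 = a2"
          using card_le_Suc0_iff_eq[OF fF] le1 by simp
        ultimately have "(a,z) = (a,y)" by blast
        thus ?thesis by simp
      qed
      have yV: "y \<in> VH" using y DV by auto
      have "dominating VH EH {y}"
        unfolding dominating_def
      proof (intro conjI ballI)
        show "{y} \<subseteq> VH" using yV by simp
        fix x assume x: "x \<in> VH - {y}"
        have aV: "a \<in> VG" using \<open>a \<in> P\<close> PV by auto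
        have "(a,x) \<notin> D" using onlyy x by auto
        then obtain q where q: "q \<in> D" "lex_edges VG EG VH EH (a,x) q"
          using D aV x unfolding dominating_def by blast
        have "fst q \<in> P" using q(1) P_def by auto
        hence "\<not> EG a (fst q)" using a A_def by auto
        hence "fst q = a" "EH x (snd q)" using q(2) by (auto simp: lex_edges_def)
        hence "snd q = y" using onlyy q(1) by (metis prod.collapse)
        thus "\<exists>u\<in>{y}. EH x u" using \<open>EH x (snd q)\<close> by auto
      qed
      hence "domination_number VH EH \<le> card {y}"
        unfolding domination_number_def
        by (rule Min_le_cardI[where P="dominating VH EH", OF fH]) (simp add: dominating_def)
      thus False using dH by simp
    qed
    have "DA = (\<Union>a\<in>A. {p\<in>D. fst p = a})" using DA_def by auto
    hence "card DA = (\<Sum>a\<in>A. card {p\<in>D. fst p = a})"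
      proof (simp only:)
        show "card (\<Union>a\<in>A. {p\<in>D. fst p = a}) = (\<Sum>a\<in>A. card {p\<in>D. fst p = a})"
          by (rule card_UN_disjoint[OF fA]) (use fD in auto)
      qed
    also have "\<dots> \<ge> (\<Sum>a\<in>A. 2)" using fib by (intro sum_mono) auto
    finally have c2: "2 * card A \<le> card DA" by simp
    have "card P = card (P - A) + card A"
      using card_Diff_subset[of A P] fA A_def card_mono[OF fP, of A] by auto
    thus ?thesis using cD c1 c2 by linarith
  qed
  finally show ?thesis .
qed

theorem mainTheorem8:
  fixes VG :: "'a set" and EG :: "'a \<Rightarrow> 'a \<Rightarrow> bool"
    and VH :: "'b set" and EH :: "'b \<Rightarrow> 'b \<Rightarrow> bool"
    and S :: "'a set" and S' :: "'b set"
  assumes "simple_graph VG EG" and "simple_graph VH EH"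
    and "no_isolated VG EG"
    and "total_domination_number VG EG = 2 * domination_number VG EG"
    and "min_dominating VG EG S"
    and "min_dominating VH EH S'" and "card S' = 2"
  shows "min_dominating (VG \<times> VH) (lex_edges VG EG VH EH) (S \<times> S')"
proof -
  have fG: "finite VG" and fH: "finite VH" using assms(1,2) by (auto simp: simple_graph_def)
  have SD: "dominating VG EG S" and cS: "card S = domination_number VG EG"
    using assms(5) by (auto simp: min_dominating_def)
  have SD': "dominating VH EH S'" and cS': "domination_number VH EH = 2"
    using assms(6,7) by (auto simp: min_dominating_def)
  obtain y0 where y0: "y0 \<in> S'" proof -
    have "S' \<noteq> {}" using assms(7) by auto
    thus ?thesis using that by blast
  qed
  have neH: "VH \<noteq> {}" using y0 SD' by (auto simp: dominating_def)
  have dom: "dominating (VG \<times> VH) (lex_edges VG EG VH EH) (S \<times> S')"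
    unfolding dominating_def
  proof (intro conjI ballI)
    show "S \<times> S' \<subseteq> VG \<times> VH" using SD SD' by (auto simp: dominating_def)
    fix p assume p: "p \<in> VG \<times> VH - S \<times> S'"
    obtain a x where ax: "p = (a,x)" by (cases p)
    show "\<exists>u\<in>S \<times> S'. lex_edges VG EG VH EH p u"
    proof (cases "a \<in> S")
      case False
      then obtain b where "b \<in> S" "EG a b" using SD p ax by (auto simp: dominating_def)
      moreover have "b \<in> VG" "y0 \<in> VH" using \<open>b \<in> S\<close> y0 SD SD' by (auto simp: dominating_def)
      ultimately show ?thesis using p ax y0 by (auto simp: lex_edges_def intro!: bexI[of _ "(b,y0)"])
    next
      case True
      hence "x \<notin> S'" using p ax by auto
      then obtain y where "y \<in> S'" "EH x y" using SD' p ax by (auto simp: dominating_def)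
      moreover have "a \<in> VG" "y \<in> VH" using True \<open>y \<in> S'\<close> SD SD' by (auto simp: dominating_def)
      ultimately show ?thesis using p ax True by (auto simp: lex_edges_def intro!: bexI[of _ "(a,y)"])
    qed
  qed
  have fP: "finite (VG \<times> VH)" using fG fH by simp
  have le1: "domination_number (VG \<times> VH) (lex_edges VG EG VH EH) \<le> card (S \<times> S')"
    unfolding domination_number_def
    by (rule Min_le_cardI[where P="dominating (VG \<times> VH) (lex_edges VG EG VH EH)", OF fP dom]) (simp add: dominating_def)
  obtain D where D: "dominating (VG \<times> VH) (lex_edges VG EG VH EH) D"
    "domination_number (VG \<times> VH) (lex_edges VG EG VH EH) = card D"
    using Min_in_cardI[where P="dominating (VG \<times> VH) (lex_edges VG EG VH EH)", OF fP dom]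
    unfolding domination_number_def by (auto simp: dominating_def)
  have "total_domination_number VG EG \<le> card D"
    by (rule lower_bound[OF assms(1,2,3) cS' neH D(1)])
  moreover have "card (S \<times> S') = total_domination_number VG EG"
    using assms(4,7) cS by (simp add: card_cartesian_product)
  ultimately show ?thesis using le1 D dom by (simp add: min_dominating_def)
qed

end
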